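(* Let $(v,u,\theta)$ be a (sufficiently regular) solution on $\Omega_T:=\{(t,y):0\le t\le T,\ y>Y(t)\}$ of the Lagrangian free boundary problem $$v_t-u_y=0,\qquad u_t+P_y=\Big(\frac{\mu u_y}{v}\Big)_y,\qquad \Big(c_v\theta+\frac{u^2}{2}\Big)_t+(Pu)_y=\Big(\frac{\kappa\theta_y}{v}+\frac{\mu uu_y}{v}\Big)_y,$$ $P=R\theta/v$, with $(u,\theta)(t,Y(t))=(u_-,\theta_-)$ and $(v,u,\theta)(0,y)=(v_0,u_0,\theta_0)(y)$, where $Y$ is nondecreasing with $Y(0)=0$, and with sufficient decay at $y=\infty$ for the integrals below to make sense. Let $(\tau,z)\in\Omega_T$. Then for all $t\in[0,\tau]$ and all $y\in I_z(\tau):=(Y(\tau),\infty)\cap([z]-1,[z]+4)$, $$v(t,y)=B_z(t,y)A_z(t)+\frac{R}{\mu}\int_0^t\frac{B_z(t,y)A_z(t)}{B_z(s,y)A_z(s)}\,\theta(s,y)\,ds,$$ where $$B_z(t,y):=v_0(y)\exp\Big\{\frac1\mu\int_y^\infty(u_0(\xi)-u(t,\xi))\varphi_z(\xi)\,d\xi\Big\},\qquad A_z(t):=\exp\Big\{\frac1\mu\int_0^t\!\!\int_{[z]+4}^{[z]+5}\Big(\frac{\mu u_y}{v}-P\Big)d\xi\,ds\Big\}.$$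
   Context: $\mu,\kappa,R>0$, $c_v>0$ constants. $[\cdot]$ denotes the integer part. The cutoff $\varphi_z\in W^{1,\infty}(\mathbb{R})$ with parameter $z\in\mathbb{R}$ is $\varphi_z(y)=1$ for $y<[z]+4$, $\varphi_z(y)=[z]+5-y$ for $[z]+4\le y<[z]+5$, $\varphi_z(y)=0$ for $y\ge[z]+5$. In the paper, $Y(t)=-u_-\int_0^t\rho(s,0)ds$ with $u_-<0$ and $v=1/\rho$ is the specific volume. *)

theory Defs
  imports "HOL-Analysis.Analysis"
begin

definition phi :: "real \<Rightarrow> real \<Rightarrow> real" where
  "phi z y = (if y < real_of_int \<lfloor>z\<rfloor> + 4 then 1
              else if y < real_of_int \<lfloor>z\<rfloor> + 5 then real_of_int \<lfloor>z\<rfloor> + 5 - y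
              else 0)"

definition OmegaT :: "real \<Rightarrow> (real \<Rightarrow> real) \<Rightarrow> (real \<times> real) set" where
  "OmegaT T Y = {(t, y). 0 \<le> t \<and> t \<le> T \<and> Y t < y}"

definition stress ::
  "real \<Rightarrow> real \<Rightarrow> (real \<Rightarrow> real \<Rightarrow> real) \<Rightarrow> (real \<Rightarrow> real \<Rightarrow> real) \<Rightarrow> (real \<Rightarrow> real \<Rightarrow> real)
   \<Rightarrow> real \<Rightarrow> real \<Rightarrow> real" where
  "stress mu R v u theta t y = mu * deriv (u t) y / v t y - R * theta t y / v t y"

definition Bz ::
  "real \<Rightarrow> (real \<Rightarrow> real) \<Rightarrow> (real \<Rightarrow> real) \<Rightarrow> (real \<Rightarrow> real \<Rightarrow> real) \<Rightarrow> real \<Rightarrow> real \<Rightarrow> real \<Rightarrow> real" where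
  "Bz mu v0 u0 u z t y =
     v0 y * exp ((1 / mu) * integral {y..} (\<lambda>\<xi>. (u0 \<xi> - u t \<xi>) * phi z \<xi>))"

definition Az ::
  "real \<Rightarrow> real \<Rightarrow> (real \<Rightarrow> real \<Rightarrow> real) \<Rightarrow> (real \<Rightarrow> real \<Rightarrow> real) \<Rightarrow> (real \<Rightarrow> real \<Rightarrow> real)
   \<Rightarrow> real \<Rightarrow> real \<Rightarrow> real" where
  "Az mu R v u theta z t =
     exp ((1 / mu) * integral {0..t} (\<lambda>s.
        integral {real_of_int \<lfloor>z\<rfloor> + 4 .. real_of_int \<lfloor>z\<rfloor> + 5} (\<lambda>\<xi>. stress mu R v u theta s \<xi>)))"

end

theory Submission
  imports Defs
begin

lemma phi_alt: "phi z x = max 0 (min 1 (real_of_int \<lfloor>z\<rfloor> + 5 - x))"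
  unfolding phi_def by auto

lemma phi_cont: "continuous_on A (\<lambda>x. phi z x)"
  unfolding phi_alt by (intro continuous_intros)

lemma integral_tail:
  fixes g :: "real \<Rightarrow> real"
  assumes "y \<le> b" "\<And>\<xi>. \<xi> > b \<Longrightarrow> g \<xi> = 0" "g integrable_on {y..b}"
  shows "integral {y..} g = integral {y..b} g"
proof -
  have h: "(g has_integral integral {y..b} g) {y..b}" using assms(3) by blast
  have "((\<lambda>\<xi>. if \<xi> \<in> {y..b} then g \<xi> else 0) has_integral integral {y..b} g) {y..b}"
    by (rule has_integral_cong[THEN iffD1, OF _ h]) auto
  then have "((\<lambda>\<xi>. if \<xi> \<in> {y..b} then g \<xi> else 0) has_integral integral {y..b} g) {y..}"
    by (rule has_integral_on_superset) auto
  then have "(g has_integral integral {y..b} g) {y..}"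
    by (rule has_integral_cong[THEN iffD1, rotated]) (use assms(2) in auto)
  then show ?thesis by (rule integral_unique)
qed

lemma ibp:
  fixes S :: "real \<Rightarrow> real"
  assumes "y \<le> real_of_int \<lfloor>z\<rfloor> + 4"
    and dS: "\<And>\<xi>. \<xi> \<in> {y..real_of_int \<lfloor>z\<rfloor> + 5} \<Longrightarrow> S differentiable at \<xi>"
  shows "((\<lambda>\<xi>. deriv S \<xi> * phi z \<xi>) has_integral
           (integral {real_of_int \<lfloor>z\<rfloor> + 4..real_of_int \<lfloor>z\<rfloor> + 5} S - S y)) {y..real_of_int \<lfloor>z\<rfloor> + 5}"
proof -
  define a where "a = real_of_int \<lfloor>z\<rfloor> + 4"
  define b where "b = real_of_int \<lfloor>z\<rfloor> + 5"
  have ab: "b = a + 1" unfolding a_def b_def by simp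
  have ya: "y \<le> a" using assms(1) a_def by simp
  have D: "\<And>\<xi>. \<xi> \<in> {y..b} \<Longrightarrow> (S has_real_derivative deriv S \<xi>) (at \<xi>)"
    using dS DERIV_deriv_iff_real_differentiable b_def by blast
  have contS: "continuous_on {a..b} S"
  proof (intro continuous_at_imp_continuous_on ballI)
    fix x assume "x \<in> {a..b}" then show "isCont S x" using ya by (intro DERIV_isCont[OF D]) auto
  qed
  have i1: "(deriv S has_integral (S a - S y)) {y..a}"
    using ya D ab
    by (intro fundamental_theorem_of_calculus)
       (auto simp: has_real_derivative_iff_has_vector_derivative[symmetric]
             intro: has_field_derivative_at_within)
  have i1': "((\<lambda>\<xi>. deriv S \<xi> * phi z \<xi>) has_integral (S a - S y)) {y..a}"
    by (rule has_integral_cong[THEN iffD1, OF _ i1]) (auto simp: phi_def a_def)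
  have i2: "((\<lambda>\<xi>. - S \<xi> + (b - \<xi>) * deriv S \<xi>) has_integral ((b - b) * S b - (b - a) * S a)) {a..b}"
  proof (rule fundamental_theorem_of_calculus)
    show "a \<le> b" using ab by simp
    fix x assume x: "x \<in> {a..b}"
    then have "(S has_real_derivative deriv S x) (at x)" using D ya by auto
    then have "((\<lambda>\<xi>. (b - \<xi>) * S \<xi>) has_real_derivative (- S x + (b - x) * deriv S x)) (at x)"
      by (auto intro!: derivative_eq_intros)
    then show "((\<lambda>\<xi>. (b - \<xi>) * S \<xi>) has_vector_derivative (- S x + (b - x) * deriv S x)) (at x within {a..b})"
      by (simp add: has_real_derivative_iff_has_vector_derivative[symmetric] has_field_derivative_at_within)
  qed
  have iS: "(S has_integral integral {a..b} S) {a..b}"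
    using contS integrable_continuous_real by blast
  have i3: "((\<lambda>\<xi>. (- S \<xi> + (b - \<xi>) * deriv S \<xi>) + S \<xi>) has_integral ((b - b) * S b - (b - a) * S a + integral {a..b} S)) {a..b}"
    by (rule has_integral_add[OF i2 iS])
  have i3': "((\<lambda>\<xi>. deriv S \<xi> * phi z \<xi>) has_integral (integral {a..b} S - S a)) {a..b}"
  proof -
    have e: "(b - b) * S b - (b - a) * S a + integral {a..b} S = integral {a..b} S - S a"
      using ab by simp
    show ?thesis
      by (rule has_integral_cong[THEN iffD1, OF _ i3[unfolded e]])
         (auto simp: phi_def a_def b_def)
  qed
  have "((\<lambda>\<xi>. deriv S \<xi> * phi z \<xi>) has_integral ((S a - S y) + (integral {a..b} S - S a))) {y..b}"
    by (rule has_integral_combine[OF ya _ i1' i3']) (simp add: ab)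
  then show ?thesis unfolding a_def b_def by simp
qed

theorem lemma2p5:
  fixes mu kappa R cv T u_m theta_m :: real
    and v u theta :: "real \<Rightarrow> real \<Rightarrow> real"
    and v0 u0 theta0 Y :: "real \<Rightarrow> real"
    and tau z :: real
  assumes params: "mu > 0" "kappa > 0" "R > 0" "cv > 0"
    and Y_mono: "mono_on {0..T} Y" and Y0: "Y 0 = 0"
    \<comment> \<open>regularity of the solution on Omega_T\<close>
    and v_pos: "\<And>t y. (t, y) \<in> OmegaT T Y \<Longrightarrow> v t y > 0"
    and cont_v: "continuous_on (OmegaT T Y) (\<lambda>(t, y). v t y)"
    and cont_u: "continuous_on (OmegaT T Y) (\<lambda>(t, y). u t y)"
    and cont_theta: "continuous_on (OmegaT T Y) (\<lambda>(t, y). theta t y)"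
    and diff_u: "\<And>t y. (t, y) \<in> OmegaT T Y \<Longrightarrow> u t differentiable at y"
    and diff_theta: "\<And>t y. (t, y) \<in> OmegaT T Y \<Longrightarrow> theta t differentiable at y"
    and cont_uy: "continuous_on (OmegaT T Y) (\<lambda>(t, y). deriv (u t) y)"
    and cont_thetay: "continuous_on (OmegaT T Y) (\<lambda>(t, y). deriv (theta t) y)"
    and diff_stress: "\<And>t y. (t, y) \<in> OmegaT T Y \<Longrightarrow> stress mu R v u theta t differentiable at y"
    and cont_stressy: "continuous_on (OmegaT T Y) (\<lambda>(t, y). deriv (stress mu R v u theta t) y)"
    and diff_eflux: "\<And>t y. (t, y) \<in> OmegaT T Y \<Longrightarrow>
          (\<lambda>\<eta>. kappa * deriv (theta t) \<eta> / v t \<eta> + mu * u t \<eta> * deriv (u t) \<eta> / v t \<eta>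
                - R * theta t \<eta> / v t \<eta> * u t \<eta>) differentiable at y"
    \<comment> \<open>the equations: v_t = u_y, u_t = (mu u_y / v - P)_y, energy equation\<close>
    and eq_mass: "\<And>t y. (t, y) \<in> OmegaT T Y \<Longrightarrow>
          ((\<lambda>s. v s y) has_real_derivative deriv (u t) y) (at t within {0..T})"
    and eq_mom: "\<And>t y. (t, y) \<in> OmegaT T Y \<Longrightarrow>
          ((\<lambda>s. u s y) has_real_derivative deriv (stress mu R v u theta t) y) (at t within {0..T})"
    and eq_energy: "\<And>t y. (t, y) \<in> OmegaT T Y \<Longrightarrow>
          ((\<lambda>s. cv * theta s y + (u s y)^2 / 2) has_real_derivative
             deriv (\<lambda>\<eta>. kappa * deriv (theta t) \<eta> / v t \<eta> + mu * u t \<eta> * deriv (u t) \<eta> / v t \<eta>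
                        - R * theta t \<eta> / v t \<eta> * u t \<eta>) y) (at t within {0..T})"
    \<comment> \<open>boundary and initial conditions\<close>
    and bc_u: "\<And>t. t \<in> {0..T} \<Longrightarrow> u t (Y t) = u_m"
    and bc_theta: "\<And>t. t \<in> {0..T} \<Longrightarrow> theta t (Y t) = theta_m"
    and ic: "\<And>y. y > Y 0 \<Longrightarrow> v 0 y = v0 y \<and> u 0 y = u0 y \<and> theta 0 y = theta0 y"
    and tz: "(tau, z) \<in> OmegaT T Y"
  shows "\<forall>t \<in> {0..tau}. \<forall>y \<in> {Y tau<..} \<inter> {real_of_int \<lfloor>z\<rfloor> - 1 <..< real_of_int \<lfloor>z\<rfloor> + 4}.
           v t y = Bz mu v0 u0 u z t y * Az mu R v u theta z t
             + (R / mu) * integral {0..t} (\<lambda>s.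
                 (Bz mu v0 u0 u z t y * Az mu R v u theta z t)
                 / (Bz mu v0 u0 u z s y * Az mu R v u theta z s) * theta s y)"
proof (intro ballI)
  fix t0 y
  assume t0: "t0 \<in> {0..tau}"
     and yI: "y \<in> {Y tau<..} \<inter> {real_of_int \<lfloor>z\<rfloor> - 1 <..< real_of_int \<lfloor>z\<rfloor> + 4}"
  define a where "a = real_of_int \<lfloor>z\<rfloor> + 4"
  define b where "b = real_of_int \<lfloor>z\<rfloor> + 5"
  have ab: "b = a + 1" unfolding a_def b_def by simp
  have tauT: "0 \<le> tau" "tau \<le> T" "Y tau < z" using tz unfolding OmegaT_def by auto
  have ya: "y < a" "Y tau < y" using yI a_def by auto
  have za: "z < a" unfolding a_def by linarith
  have Ymon: "\<And>s. s \<in> {0..tau} \<Longrightarrow> Y s \<le> Y tau"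
    using Y_mono tauT unfolding mono_on_def by auto
  have inO: "\<And>s \<xi>. s \<in> {0..tau} \<Longrightarrow> y \<le> \<xi> \<Longrightarrow> (s, \<xi>) \<in> OmegaT T Y"
    using Ymon ya tauT unfolding OmegaT_def by fastforce
  have y0: "0 < y" using Ymon[of 0] ya Y0 tauT by auto
  have KO: "{0..tau} \<times> {y..b} \<subseteq> OmegaT T Y" using inO by auto
  have KO': "{0..tau} \<times> {a..b} \<subseteq> OmegaT T Y" using inO ya by auto
  define S where "S = stress mu R v u theta"
  have contS: "continuous_on (OmegaT T Y) (\<lambda>(t, y). S t y)"
  proof -
    have e: "(\<lambda>(t, y). S t y) = (\<lambda>p. mu * (\<lambda>(t, y). deriv (u t) y) p / (\<lambda>(t, y). v t y) p
              - R * (\<lambda>(t, y). theta t y) p / (\<lambda>(t, y). v t y) p)"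
      by (simp add: S_def stress_def fun_eq_iff split_def)
    show ?thesis unfolding e
      by (intro continuous_intros cont_uy cont_v cont_theta) (auto dest: v_pos)
  qed
  define G where "G s = integral {a..b} (S s)" for s
  define H where "H s = integral {0..s} G" for s
  define F where "F s = integral {y..} (\<lambda>\<xi>. (u0 \<xi> - u s \<xi>) * phi z \<xi>)" for s
  define P where "P s = Bz mu v0 u0 u z s y * Az mu R v u theta z s" for s
  have P_eq: "P s = v0 y * exp (F s / mu) * exp (H s / mu)" for s
    unfolding P_def Bz_def Az_def F_def H_def G_def S_def a_def b_def by simp
  have v0pos: "v0 y > 0" using v_pos[OF inO[of 0 y]] ic[of y] y0 Y0 tauT by auto
  have Ppos: "P s > 0" for s using P_eq v0pos by simp
  have Gcont: "continuous_on {0..tau} G"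
  proof -
    have "continuous_on {0..tau} (\<lambda>s. integral (cbox a b) (S s))"
      by (rule integral_continuous_on_param) (use continuous_on_subset[OF contS KO'] in \<open>simp add: cbox_interval\<close>)
    then show ?thesis unfolding G_def cbox_interval .
  qed
  have uc: "continuous_on {y..b} (u s)" if s: "s \<in> {0..tau}" for s
  proof -
    have "continuous_on {y..b} (\<lambda>x. (\<lambda>(t, y). u t y) (s, x))"
      by (rule continuous_on_compose2[OF cont_u]) (use inO s in \<open>auto intro!: continuous_intros\<close>)
    then show ?thesis by simp
  qed
  have fint: "(\<lambda>\<xi>. (u0 \<xi> - u s \<xi>) * phi z \<xi>) integrable_on {y..b}" if s: "s \<in> {0..tau}" for s
  proof -
    have "continuous_on {y..b} (\<lambda>\<xi>. (u 0 \<xi> - u s \<xi>) * phi z \<xi>)"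
      using uc[OF s] uc[of 0] tauT by (intro continuous_intros phi_cont) auto
    then have "continuous_on {y..b} (\<lambda>\<xi>. (u0 \<xi> - u s \<xi>) * phi z \<xi>)"
      by (rule continuous_on_cong[THEN iffD1, rotated 2]) (use ic y0 Y0 in auto)
    then show ?thesis by (rule integrable_continuous_real)
  qed
  have Fb: "F s = integral {y..b} (\<lambda>\<xi>. (u0 \<xi> - u s \<xi>) * phi z \<xi>)" if s: "s \<in> {0..tau}" for s
    unfolding F_def by (rule integral_tail) (use ya ab fint[OF s] in \<open>auto simp: phi_def b_def\<close>)
  have Fder: "(F has_real_derivative (S s y - G s)) (at s within {0..tau})" if s: "s \<in> {0..tau}" for s
  proof -
    have pc: "continuous_on ({0..tau} \<times> cbox y b) (\<lambda>p. phi z (snd p))"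
      by (rule continuous_on_compose2[OF phi_cont[of UNIV] continuous_on_snd]) auto
    have dc: "continuous_on ({0..tau} \<times> cbox y b) (\<lambda>(x, t). deriv (S x) t)"
      using continuous_on_subset[OF cont_stressy KO] by (simp add: S_def cbox_interval)
    have e: "(\<lambda>(x, t). - (deriv (S x) t * phi z t)) = (\<lambda>p. - ((\<lambda>(x, t). deriv (S x) t) p * phi z (snd p)))"
      by (simp add: fun_eq_iff split_def)
    have L: "((\<lambda>s. integral (cbox y b) (\<lambda>\<xi>. (u0 \<xi> - u s \<xi>) * phi z \<xi>)) has_field_derivative
               integral (cbox y b) (\<lambda>\<xi>. - (deriv (S s) \<xi> * phi z \<xi>))) (at s within {0..tau})"
    proof (rule leibniz_rule_field_derivative[where fx="\<lambda>s \<xi>. - (deriv (S s) \<xi> * phi z \<xi>)"])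
      fix x t assume x: "x \<in> {0..tau}" and t: "t \<in> cbox y b"
      have "((\<lambda>s. u s t) has_real_derivative deriv (S x) t) (at x within {0..tau})"
        using has_field_derivative_subset[OF eq_mom[OF inO[OF x]], of t "{0..tau}"] t tauT
        by (auto simp: S_def cbox_interval)
      then show "((\<lambda>s. (u0 t - u s t) * phi z t) has_field_derivative - (deriv (S x) t * phi z t)) (at x within {0..tau})"
        by (auto intro!: derivative_eq_intros)
    next
      fix x assume "x \<in> {0..tau}" then show "(\<lambda>\<xi>. (u0 \<xi> - u x \<xi>) * phi z \<xi>) integrable_on cbox y b"
        using fint by (simp add: cbox_interval)
    next
      show "continuous_on ({0..tau} \<times> cbox y b) (\<lambda>(x, t). - (deriv (S x) t * phi z t))"
        unfolding e by (intro continuous_intros dc pc)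
    qed (use s in auto)
    have I: "integral (cbox y b) (\<lambda>\<xi>. - (deriv (S s) \<xi> * phi z \<xi>)) = S s y - G s"
    proof -
      have "((\<lambda>\<xi>. deriv (S s) \<xi> * phi z \<xi>) has_integral (integral {a..b} (S s) - S s y)) {y..b}"
        unfolding a_def b_def
        by (rule ibp) (use ya diff_stress inO s in \<open>auto simp: a_def S_def\<close>)
      note h = integral_unique[OF has_integral_neg[OF this]]
      show ?thesis unfolding cbox_interval G_def h by simp
    qed
    show ?thesis
    proof (rule has_field_derivative_transform_within[where d=1])
      show "((\<lambda>s. integral {y..b} (\<lambda>\<xi>. (u0 \<xi> - u s \<xi>) * phi z \<xi>)) has_real_derivative S s y - G s) (at s within {0..tau})"
        using L unfolding I by (simp add: cbox_interval)
    qed (use s Fb in auto)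
  qed
  have Hder: "(H has_real_derivative G s) (at s within {0..tau})" if s: "s \<in> {0..tau}" for s
    unfolding H_def by (rule integral_has_real_derivative[OF Gcont s])
  have Pfun: "P = (\<lambda>s. v0 y * exp (F s / mu) * exp (H s / mu))" by (rule ext, rule P_eq)
  have Pder: "(P has_real_derivative (P s * S s y / mu)) (at s within {0..tau})" if s: "s \<in> {0..tau}" for s
    unfolding Pfun using params
    by (auto intro!: derivative_eq_intros Fder[OF s] Hder[OF s] simp: field_simps)
  define W where "W s = v s y / P s" for s
  have Wder: "(W has_real_derivative (R * theta s y / (mu * P s))) (at s within {0..t0})" if s: "s \<in> {0..t0}" for s
  proof -
    have s': "s \<in> {0..tau}" using s t0 by auto
    have sub: "{0..t0} \<subseteq> {0..tau}" "{0..t0} \<subseteq> {0..T}" using t0 tauT by auto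
    have vd: "((\<lambda>s. v s y) has_real_derivative deriv (u s) y) (at s within {0..t0})"
      by (rule has_field_derivative_subset[OF eq_mass[OF inO[OF s']] sub(2)]) simp
    have pd: "(P has_real_derivative P s * S s y / mu) (at s within {0..t0})"
      by (rule has_field_derivative_subset[OF Pder[OF s'] sub(1)])
    have vp: "v s y > 0" using v_pos[OF inO[OF s']] by simp
    have "((\<lambda>s. v s y / P s) has_real_derivative ((deriv (u s) y * P s - v s y * (P s * S s y / mu)) / (P s * P s))) (at s within {0..t0})"
      by (rule DERIV_divide[OF vd pd]) (use Ppos[of s] in simp)
    moreover have "(deriv (u s) y * P s - v s y * (P s * S s y / mu)) / (P s * P s) = R * theta s y / (mu * P s)"
      using Ppos[of s] vp params unfolding S_def stress_def by (simp add: field_simps)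
    ultimately show ?thesis unfolding W_def[abs_def] by simp
  qed
  have W0: "W 0 = 1"
  proof -
    have "F 0 = integral {y..} (\<lambda>\<xi>. 0)"
      unfolding F_def by (rule integral_cong) (use ic y0 Y0 in auto)
    then have F0: "F 0 = 0" by simp
    have H0: "H 0 = 0" unfolding H_def by simp
    show ?thesis unfolding W_def P_eq F0 H0 using ic[of y] y0 Y0 v0pos by simp
  qed
  have int1: "((\<lambda>s. R * theta s y / (mu * P s)) has_integral (W t0 - 1)) {0..t0}"
    using fundamental_theorem_of_calculus[of 0 t0 W "\<lambda>s. R * theta s y / (mu * P s)"] Wder W0 t0
    by (auto simp: has_real_derivative_iff_has_vector_derivative[symmetric])
  have int2: "((\<lambda>s. P t0 / P s * theta s y) has_integral (P t0 * mu / R * (W t0 - 1))) {0..t0}"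
  proof -
    have "((\<lambda>s. P t0 * mu / R * (R * theta s y / (mu * P s))) has_integral (P t0 * mu / R * (W t0 - 1))) {0..t0}"
      by (rule has_integral_mult_right[OF int1])
    then show ?thesis
      by (rule has_integral_cong[THEN iffD1, rotated])
         (use params Ppos in \<open>auto simp: field_simps\<close>)
  qed
  have "v t0 y = P t0 + (R / mu) * integral {0..t0} (\<lambda>s. P t0 / P s * theta s y)"
  proof -
    have "(R / mu) * integral {0..t0} (\<lambda>s. P t0 / P s * theta s y) = v t0 y - P t0"
    proof -
      have e1: "P t0 * mu / R * (W t0 - 1) = mu / R * (v t0 y - P t0)"
        using Ppos[of t0] params unfolding W_def by (simp add: field_simps)
      show ?thesis unfolding integral_unique[OF int2] e1 using params by simp
    qed
    then show ?thesis by simp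
  qed
  then show "v t0 y = Bz mu v0 u0 u z t0 y * Az mu R v u theta z t0
             + (R / mu) * integral {0..t0} (\<lambda>s.
                 (Bz mu v0 u0 u z t0 y * Az mu R v u theta z t0)
                 / (Bz mu v0 u0 u z s y * Az mu R v u theta z s) * theta s y)"
    unfolding P_def .
qed

end
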